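(* Let $H=\{\lambda\in B_{1/\sqrt2}(0):\ \mathrm{Re}(\lambda)>0,\ \mathrm{Im}(\lambda)>0\}\setminus B_{2/3}(1/3)$. Every $\lambda_0\in\mathcal M_0\cap\mathrm{int}(H)$ is an interior point of $\mathcal M$.
   Context: $\mathbb D=\{z\in\mathbb C:|z|<1\}$; $B_r(z_0)$ is the open disc of radius $r$ centered at $z_0$. $\mathcal M=\{\lambda\in\mathbb D:\ \exists (a_k)_{k\ge1},\ a_k\in\{-1,0,1\},\ 1+\sum_{k\ge1}a_k\lambda^k=0\}$ (the set of $\lambda$ for which the attractor of $\{\lambda z-1,\lambda z+1\}$ is connected). $\mathcal M_0=\{\lambda\in\mathbb D:\ \exists n\ge1,\ a_1,\dots,a_n\in\{-1,0,1\},\ 1+\sum_{k=1}^n a_k\lambda^k=0\}$ is the set of zeros in $\mathbb D$ of polynomials of this form. *)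

theory Defs
  imports "HOL-Analysis.Analysis"
begin

definition M_set :: "complex set" where
  "M_set = {z. cmod z < 1 \<and>
     (\<exists>a :: nat \<Rightarrow> int. (\<forall>k\<ge>1. a k \<in> {-1, 0, 1}) \<and>
        1 + (\<Sum>k. of_int (a (Suc k)) * z ^ Suc k) = 0)}"

definition M0_set :: "complex set" where
  "M0_set = {z. cmod z < 1 \<and>
     (\<exists>n\<ge>1. \<exists>a :: nat \<Rightarrow> int. (\<forall>k\<in>{1..n}. a k \<in> {-1, 0, 1}) \<and>
        1 + (\<Sum>k=1..n. of_int (a k) * z ^ k) = 0)}"

definition H_set :: "complex set" where
  "H_set = {z. z \<in> ball 0 (1 / sqrt 2) \<and> Re z > 0 \<and> Im z > 0}
            - ball (1/3) (2/3)"

end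

theory Submission
  imports Defs
begin

definition dg :: "real \<Rightarrow> int" where
  "dg x = (if x > 1/2 then 1 else if x < -1/2 then -1 else 0)"

definition stp :: "real \<Rightarrow> real \<Rightarrow> real \<times> real \<Rightarrow> real \<times> real" where
  "stp uu r2 p = (snd p + 2*uu*(fst p - of_int (dg (fst p)))/r2, -(fst p - of_int (dg (fst p)))/r2)"

lemma dg_mem: "dg x \<in> {-1,0,1}"
  by (simp add: dg_def)

lemma dg_close: "\<bar>x\<bar> \<le> 3/2 \<Longrightarrow> \<bar>x - of_int (dg x)\<bar> \<le> 1/2"
  unfolding dg_def by (auto simp: abs_if)

lemma stp_inv:
  assumes uu: "uu > 0" and r: "r2 > 0" and c: "1 + 2*uu \<le> 3*r2"
    and hx: "\<bar>fst p\<bar> \<le> (1+2*uu)/(2*r2)" and hy: "\<bar>snd p\<bar> \<le> 1/(2*r2)"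
  shows "\<bar>fst (stp uu r2 p)\<bar> \<le> (1+2*uu)/(2*r2) \<and> \<bar>snd (stp uu r2 p)\<bar> \<le> 1/(2*r2)"
proof -
  have "(1+2*uu)/(2*r2) \<le> 3/2" using c r by (simp add: divide_simps)
  then have e: "\<bar>fst p - of_int (dg (fst p))\<bar> \<le> 1/2" using hx dg_close[of "fst p"] by linarith
  define e where "e = fst p - of_int (dg (fst p))"
  have e': "\<bar>e\<bar> \<le> 1/2" using e e_def by simp
  have 1: "\<bar>-e/r2\<bar> \<le> 1/(2*r2)" using e' r by (simp add: divide_simps abs_minus_commute)
  have "\<bar>2*uu*e/r2\<bar> = 2*uu*\<bar>e\<bar>/r2" using uu r by (simp add: abs_mult)
  also have "\<dots> \<le> 2*uu*(1/2)/r2" using uu r e' by (simp add: divide_right_mono)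
  finally have "\<bar>2*uu*e/r2\<bar> \<le> uu/r2" by simp
  then have "\<bar>snd p + 2*uu*e/r2\<bar> \<le> 1/(2*r2) + uu/r2" using hy by linarith
  also have "1/(2*r2) + uu/r2 = (1+2*uu)/(2*r2)" using r by (simp add: field_simps)
  finally show ?thesis using 1 unfolding stp_def e_def by simp
qed

lemma stp_eq:
  fixes l :: complex
  assumes r: "r2 = Re l ^ 2 + Im l ^ 2" "r2 \<noteq> 0"
  shows "of_real (fst p) + of_real (snd p) * l
     = of_int (dg (fst p)) + l * (of_real (fst (stp (Re l) r2 p)) + of_real (snd (stp (Re l) r2 p)) * l)"
proof -
  define e where "e = fst p - of_int (dg (fst p))"
  define uu where "uu = Re l"
  define vv where "vv = Im l"
  define X where "X = fst (stp (Re l) r2 p)"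
  define Y where "Y = snd (stp (Re l) r2 p)"
  define d where "d = real_of_int (dg (fst p))"
  have fx: "X = snd p + 2*uu*e/r2" by (simp add: X_def stp_def e_def uu_def)
  have fy: "Y = - e/r2" by (simp add: Y_def stp_def e_def)
  have r': "r2 = uu^2 + vv^2" using r by (simp add: uu_def vv_def)
  have ReR: "Re (of_real d + l * (of_real X + of_real Y * l)) = d + uu * X + Y * (uu^2 - vv^2)"
    by (simp add: power2_eq_square uu_def vv_def algebra_simps)
  have ImR: "Im (of_real d + l * (of_real X + of_real Y * l)) = vv * X + 2 * uu * vv * Y"
    by (simp add: power2_eq_square uu_def vv_def algebra_simps)
  have A: "d + uu * X + Y * (uu^2 - vv^2) = d + uu * snd p + e * ((uu^2+vv^2)/r2)"
    unfolding fx fy using r(2) by (simp add: field_simps power2_eq_square)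
  have B: "vv * X + 2 * uu * vv * Y = vv * snd p"
    unfolding fx fy using r(2) by (simp add: field_simps power2_eq_square)
  have C: "(uu^2+vv^2)/r2 = 1" using r' r(2) by simp
  have A': "d + uu * X + Y * (uu^2 - vv^2) = d + uu * snd p + e" using A C by simp
  have Re1: "Re (of_real (fst p) + of_real (snd p) * l) = fst p + uu * snd p" by (simp add: uu_def)
  have Im1: "Im (of_real (fst p) + of_real (snd p) * l) = vv * snd p" by (simp add: vv_def)
  have "of_real (fst p) + of_real (snd p) * l = of_real d + l * (of_real X + of_real Y * l)"
  proof (rule complex_eqI)
    show "Re (of_real (fst p) + of_real (snd p) * l) = Re (of_real d + l * (of_real X + of_real Y * l))"
      using Re1 ReR A' unfolding e_def d_def by linarith
    show "Im (of_real (fst p) + of_real (snd p) * l) = Im (of_real d + l * (of_real X + of_real Y * l))"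
      using Im1 ImR B by linarith
  qed
  then show ?thesis by (simp add: d_def X_def Y_def)
qed

lemma trap:
  fixes l :: complex
  assumes u: "Re l > 0" and lt1: "cmod l < 1" and l0: "l \<noteq> 0"
    and c: "1 + 2 * Re l \<le> 3 * (Re l ^ 2 + Im l ^ 2)"
    and hx: "\<bar>x\<bar> \<le> (1 + 2 * Re l)/(2 * (Re l ^ 2 + Im l ^ 2))"
    and hy: "\<bar>y\<bar> \<le> 1/(2 * (Re l ^ 2 + Im l ^ 2))"
  shows "\<exists>cf::nat \<Rightarrow> int. (\<forall>k. cf k \<in> {-1,0,1}) \<and>
           (\<lambda>k. of_int (cf k) * l ^ k) sums (of_real x + of_real y * l)"
proof -
  define r2 where "r2 = Re l ^ 2 + Im l ^ 2"
  have r2pos: "r2 > 0" using l0 unfolding r2_def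
    by (metis add_nonneg_pos complex_eq_0 not_less_iff_gr_or_eq sum_power2_gt_zero_iff)
  define P where "P k = (stp (Re l) r2 ^^ k) (x, y)" for k
  define A where "A = (1 + 2 * Re l)/(2 * r2)"
  define B where "B = 1/(2 * r2)"
  have inv: "\<bar>fst (P k)\<bar> \<le> A \<and> \<bar>snd (P k)\<bar> \<le> B" for k
  proof (induction k)
    case 0 then show ?case using hx hy by (simp add: P_def A_def B_def r2_def)
  next
    case (Suc k)
    have "P (Suc k) = stp (Re l) r2 (P k)" by (simp add: P_def)
    then show ?case using stp_inv[OF u r2pos c[folded r2_def], of "P k"] Suc
      by (simp add: A_def B_def)
  qed
  define cf where "cf k = dg (fst (P k))" for k
  define Q where "Q k = of_real (fst (P k)) + of_real (snd (P k)) * l" for k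
  have Qstep: "Q k = of_int (cf k) + l * Q (Suc k)" for k
    using stp_eq[OF r2_def r2pos[THEN less_imp_neq, symmetric], of "P k"]
    by (simp add: Q_def cf_def P_def)
  have part: "of_real x + of_real y * l = (\<Sum>i<N. of_int (cf i) * l ^ i) + l ^ N * Q N" for N
  proof (induction N)
    case 0 then show ?case by (simp add: Q_def P_def)
  next
    case (Suc N)
    then show ?case using Qstep[of N] by (simp add: algebra_simps)
  qed
  have Qb: "cmod (Q k) \<le> A + B" for k
  proof -
    have "cmod (Q k) \<le> \<bar>fst (P k)\<bar> + \<bar>snd (P k)\<bar> * cmod l"
      unfolding Q_def by (metis norm_mult norm_of_real norm_triangle_le order_refl)
    also have "\<dots> \<le> A + B * 1"
      using inv[of k] lt1 by (intro add_mono mult_mono) auto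
    finally show ?thesis by simp
  qed
  have z: "(\<lambda>N. l ^ N * Q N) \<longlonglongrightarrow> 0"
  proof (rule Lim_null_comparison)
    show "\<forall>\<^sub>F N in sequentially. cmod (l ^ N * Q N) \<le> cmod l ^ N * (A + B)"
      using Qb by (simp add: norm_mult norm_power mult_left_mono)
    show "(\<lambda>N. cmod l ^ N * (A + B)) \<longlonglongrightarrow> 0"
      using lt1 by (intro tendsto_mult_left_zero LIMSEQ_power_zero) simp
  qed
  have "(\<lambda>k. of_int (cf k) * l ^ k) sums (of_real x + of_real y * l)"
  proof -
    have "(\<lambda>N. (of_real x + of_real y * l) - l ^ N * Q N) \<longlonglongrightarrow> (of_real x + of_real y * l) - 0"
      by (intro tendsto_diff tendsto_const z)
    moreover have "(\<lambda>N. (of_real x + of_real y * l) - l ^ N * Q N) = (\<lambda>N. \<Sum>i<N. of_int (cf i) * l ^ i)"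
      using part by (simp add: fun_eq_iff algebra_simps)
    ultimately show ?thesis unfolding sums_def by simp
  qed
  moreover have "\<forall>k. cf k \<in> {-1,0,1}" using dg_mem by (simp add: cf_def)
  ultimately show ?thesis by blast
qed


theorem mainTheorem2:
  assumes "z0 \<in> M0_set \<inter> interior H_set"
  shows "z0 \<in> interior M_set"
proof -
  from assms have zM0: "z0 \<in> M0_set" and zH: "z0 \<in> interior H_set" by auto
  from zM0 obtain n and a :: "nat \<Rightarrow> int" where n1: "n \<ge> 1"
    and ha: "\<forall>k\<in>{1..n}. a k \<in> {-1, 0, 1}"
    and hz: "1 + (\<Sum>k=1..n. of_int (a k) * z0 ^ k) = 0"
    unfolding M0_set_def by blast
  define p where "p z = 1 + (\<Sum>k=1..n. of_int (a k) * z ^ k)" for z :: complex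
  define S where "S = interior H_set \<inter> {z. cmod (p z) * (1 + Im z) < cmod z ^ (n+1) * Im z}"
  have "open S"
    unfolding S_def p_def
    by (intro open_Int open_interior open_Collect_less continuous_intros)
  moreover have "z0 \<in> S"
  proof -
    have "z0 \<in> H_set" using zH interior_subset by blast
    then have "Im z0 > 0" "z0 \<noteq> 0" unfolding H_set_def by auto
    then show ?thesis using zH hz unfolding S_def p_def by auto
  qed
  moreover have "S \<subseteq> M_set"
  proof
    fix l assume lS: "l \<in> S"
    then have lH: "l \<in> H_set" using interior_subset unfolding S_def by blast
    have u: "Re l > 0" and v: "Im l > 0" and lr: "cmod l < 1 / sqrt 2"
      and lb: "\<not> dist (1/3) l < 2/3"
      using lH unfolding H_set_def by auto
    have l0: "l \<noteq> 0" using u by auto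
    have ineq: "cmod (p l) * (1 + Im l) < cmod l ^ (n+1) * Im l" using lS unfolding S_def by auto
    define r2 where "r2 = Re l ^ 2 + Im l ^ 2"
    have r2c: "r2 = cmod l ^ 2" unfolding r2_def by (simp add: cmod_power2)
    have "cmod l ^ 2 < (1 / sqrt 2) ^ 2"
      using lr by (intro power_strict_mono) auto
    then have r2h: "r2 < 1/2" using r2c by (simp add: power_divide)
    have "1 / sqrt 2 < (1::real)" by (simp add: divide_simps)
    then have lt1: "cmod l < 1" using lr by linarith
    have "2/3 \<le> cmod (1/3 - l)" using lb by (simp add: dist_norm)
    then have "(2/3)^2 \<le> cmod (1/3 - l) ^ 2" by (intro power_mono) auto
    also have "cmod (1/3 - l) ^ 2 = (1/3 - Re l)^2 + Im l ^ 2" by (simp add: cmod_power2)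
    finally have c: "1 + 2 * Re l \<le> 3 * (Re l ^ 2 + Im l ^ 2)"
      by (simp add: power2_eq_square algebra_simps)
    define w where "w = - p l / l ^ (n+1)"
    have lpos: "cmod l ^ (n+1) > 0" using l0 by simp
    have wb: "cmod w * (1 + Im l) < Im l"
    proof -
      have "cmod w = cmod (p l) / cmod l ^ (n+1)" by (simp add: w_def norm_divide norm_power norm_mult)
      then have "cmod w * (1 + Im l) = (cmod (p l) * (1 + Im l)) / cmod l ^ (n+1)" by simp
      also have "\<dots> < (cmod l ^ (n+1) * Im l) / cmod l ^ (n+1)"
        using ineq lpos by (intro divide_strict_right_mono) auto
      also have "(cmod l ^ (n+1) * Im l) / cmod l ^ (n+1) = Im l"
        using lpos l0 by (intro nonzero_mult_div_cancel_left) simp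
      finally show ?thesis .
    qed
    define y where "y = Im w / Im l"
    define x where "x = Re w - y * Re l"
    have wxy: "w = of_real x + of_real y * l"
      using v by (intro complex_eqI) (simp_all add: x_def y_def)
    have B1: "1 \<le> 1 / (2 * r2)" using r2h r2c l0 by (simp add: divide_simps)
    have A1: "1 / (2 * r2) \<le> (1 + 2 * Re l) / (2 * r2)" using u r2c
      by (intro divide_right_mono) auto
    have cw: "cmod w < Im l / (1 + Im l)" using wb v by (simp add: divide_simps)
    have cw1: "cmod w * (1 + 1 / Im l) < 1"
    proof -
      have "cmod w * (1 + 1 / Im l) = cmod w * (1 + Im l) / Im l" using v by (simp add: field_simps)
      also have "\<dots> < 1" using wb v by (simp add: divide_simps)
      finally show ?thesis .
    qed
    have ure: "Re l < 1" using lt1 complex_Re_le_cmod[of l] by linarith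
    have hy: "\<bar>y\<bar> \<le> cmod w / Im l"
    proof -
      have "\<bar>y\<bar> = \<bar>Im w\<bar> / Im l" unfolding y_def using v by (simp add: abs_div)
      also have "\<dots> \<le> cmod w / Im l"
        by (intro divide_right_mono abs_Im_le_cmod) (use v in simp)
      finally show ?thesis .
    qed
    have hy1: "\<bar>y\<bar> \<le> 1"
    proof -
      have "cmod w / Im l = cmod w * (1 / Im l)" by simp
      also have "\<dots> \<le> cmod w * (1 + 1 / Im l)" by (intro mult_left_mono) auto
      finally have "cmod w / Im l \<le> 1" using cw1 by linarith
      then show ?thesis using hy by linarith
    qed
    have hx1: "\<bar>x\<bar> \<le> 1"
    proof -
      have "\<bar>x\<bar> \<le> \<bar>Re w\<bar> + \<bar>y\<bar> * Re l" unfolding x_def using u abs_triangle_ineq4[of "Re w" "y * Re l"] by (simp add: abs_mult)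
      also have "\<dots> \<le> cmod w + (cmod w / Im l) * 1"
        using abs_Re_le_cmod[of w] hy ure u
        by (intro add_mono mult_mono) auto
      also have "\<dots> = cmod w * (1 + 1 / Im l)" by (simp add: field_simps)
      finally show ?thesis using cw1 by linarith
    qed
    obtain cf :: "nat \<Rightarrow> int" where cf: "\<forall>k. cf k \<in> {-1,0,1}"
      and cs: "(\<lambda>k. of_int (cf k) * l ^ k) sums w"
      using trap[OF u lt1 l0 c, of x y] hx1 hy1 B1 A1 wxy unfolding r2_def by auto
    define a' where "a' k = (if k \<le> n then a k else cf (k - n - 1))" for k
    define f where "f k = of_int (a' (Suc k)) * l ^ Suc k" for k
    have "(\<lambda>i. f (i + n)) = (\<lambda>i. of_int (cf i) * l ^ i * l ^ (n+1))"
      by (simp add: fun_eq_iff f_def a'_def power_add algebra_simps)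
    then have "(\<lambda>i. f (i + n)) sums (w * l ^ (n+1))"
      using sums_mult2[OF cs, of "l ^ (n+1)"] by simp
    moreover have "w * l ^ (n+1) = - p l" using l0 by (simp add: w_def)
    ultimately have "f sums (- p l + (\<Sum>i<n. f i))" by (simp add: sums_iff_shift)
    moreover have "(\<Sum>i<n. f i) = (\<Sum>k=1..n. of_int (a k) * l ^ k)"
    proof -
      have "(\<Sum>i<n. f i) = (\<Sum>i<n. of_int (a (Suc i)) * l ^ Suc i)"
        by (intro sum.cong) (auto simp: f_def a'_def)
      also have "\<dots> = (\<Sum>i\<in>{0..<n}. of_int (a (Suc i)) * l ^ Suc i)"
        by (simp add: atLeast0LessThan)
      also have "\<dots> = (\<Sum>k\<in>{Suc 0..<Suc n}. of_int (a k) * l ^ k)"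
        by (rule sum.shift_bounds_Suc_ivl[symmetric])
      also have "\<dots> = (\<Sum>k=1..n. of_int (a k) * l ^ k)"
        by (simp add: atLeastLessThanSuc_atLeastAtMost)
      finally show ?thesis .
    qed
    ultimately have "f sums (-1)" by (simp add: p_def)
    then have "1 + (\<Sum>k. of_int (a' (Suc k)) * l ^ Suc k) = 0"
    proof -
      have "(\<Sum>k. of_int (a' (Suc k)) * l ^ Suc k) = (-1 :: complex)"
        using \<open>f sums (-1)\<close> unfolding f_def by (rule sums_unique[symmetric])
      then show ?thesis by simp
    qed
    moreover have "\<forall>k\<ge>1. a' k \<in> {-1,0,1}" using ha cf by (auto simp: a'_def)
    ultimately show "l \<in> M_set" unfolding M_set_def using lt1 by blast
  qed
  ultimately show ?thesis by (rule interiorI)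
qed

end
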